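(* Let $k\ge 3$ and $r\ge 2$ be integers, let $H$ be a selfish $k$-graph with at least one edge, and let $G=G_H$ be a $(k-1)$-graph obtained from $H$ by removing, from each edge of $H$, one vertex of degree one. Then \[ R(H;r)\le R(G;r)+r\,(|E(H)|-1)+1 . \]
   Context: A $k$-graph is a $k$-uniform hypergraph. An edge of a hypergraph is called selfish if it contains a vertex of degree one (a vertex belonging to no other edge); a hypergraph is selfish if every edge is selfish. For a selfish $k$-graph $H$, $G_H$ denotes the $(k-1)$-graph obtained by deleting one degree-one vertex from each edge of $H$ (deleted vertices are removed from the vertex set), so $|E(G_H)|=|E(H)|$. For a $j$-graph $F$ and integer $r\ge2$, $R(F;r)$ is the minimum $n$ such that every $r$-coloring of the edges of the complete $j$-graph $K_n^{(j)}$ contains a monochromatic copy of $F$. *)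

theory Defs
  imports Main
begin

definition is_kgraph :: "nat \<Rightarrow> 'a set \<Rightarrow> 'a set set \<Rightarrow> bool" where
  "is_kgraph k V E \<longleftrightarrow> finite V \<and> (\<forall>e\<in>E. e \<subseteq> V \<and> card e = k)"

definition hdegree :: "'a set set \<Rightarrow> 'a \<Rightarrow> nat" where
  "hdegree E v = card {e\<in>E. v \<in> e}"

definition selfish :: "'a set set \<Rightarrow> bool" where
  "selfish E \<longleftrightarrow> (\<forall>e\<in>E. \<exists>v\<in>e. hdegree E v = 1)"

definition mono_copy :: "nat \<Rightarrow> (nat set \<Rightarrow> nat) \<Rightarrow> nat \<Rightarrow> 'a set \<Rightarrow> 'a set set \<Rightarrow> bool" where
  "mono_copy n col c V E \<longleftrightarrow>
     (\<exists>f. inj_on f V \<and> f ` V \<subseteq> {..<n} \<and> (\<forall>e\<in>E. col (f ` e) = c))"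

definition ramsey_num :: "nat \<Rightarrow> nat \<Rightarrow> 'a set \<Rightarrow> 'a set set \<Rightarrow> nat" where
  "ramsey_num j r V E = (LEAST n. \<forall>col :: nat set \<Rightarrow> nat.
       (\<forall>S. S \<subseteq> {..<n} \<and> card S = j \<longrightarrow> col S < r) \<longrightarrow>
       (\<exists>c<r. mono_copy n col c V E))"

end

theory Submission
  imports Defs "HOL-Library.Ramsey"
begin

lemma ramsey_exists:
  assumes "is_kgraph j V E" "r \<ge> 1"
  shows "\<exists>n. \<forall>col :: nat set \<Rightarrow> nat.
       (\<forall>S. S \<subseteq> {..<n} \<and> card S = j \<longrightarrow> col S < r) \<longrightarrow>
       (\<exists>c<r. mono_copy n col c V E)"
proof -
  obtain N :: nat where N: "partn_lst {..<N} (replicate r (card V)) j" using ramsey_full[of "replicate r (card V)" j] by blast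
  have finV: "finite V" using assms(1) by (simp add: is_kgraph_def)
  show ?thesis
  proof (rule exI[of _ N], intro allI impI)
    fix col :: "nat set \<Rightarrow> nat"
    assume col: "\<forall>S. S \<subseteq> {..<N} \<and> card S = j \<longrightarrow> col S < r"
    have "col \<in> nsets {..<N} j \<rightarrow> {..<r}" using col by (auto simp: nsets_def)
    then obtain i H where i: "i < r" and H: "H \<in> nsets {..<N} (card V)"
        and mono: "col ` nsets H j \<subseteq> {i}"
      using partn_lstE[OF N, of col r] by auto
    have Hs: "H \<subseteq> {..<N}" "finite H" "card H = card V" using H i by (auto simp: nsets_def)
    obtain g where g: "bij_betw g V H" using finite_same_card_bij[OF finV Hs(2)] Hs(3) by metis
    have ginj: "inj_on g V" using g bij_betw_imp_inj_on by blast
    have gV: "g ` V = H" using g by (simp add: bij_betw_def)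
    have "\<forall>e\<in>E. col (g ` e) = i"
    proof
      fix e assume e: "e \<in> E"
      have ev: "e \<subseteq> V" "card e = j" using assms(1) e by (auto simp: is_kgraph_def)
      have "card (g ` e) = j" using ev card_image inj_on_subset[OF ginj ev(1)] by metis
      moreover have "g ` e \<subseteq> H" using ev gV by blast
      moreover have "finite (g ` e)" using ev finV finite_subset by blast
      ultimately have "g ` e \<in> nsets H j" by (simp add: nsets_def)
      then show "col (g ` e) = i" using mono by blast
    qed
    then show "\<exists>c<r. mono_copy N col c V E"
      unfolding mono_copy_def using i ginj gV Hs(1) by blast
  qed
qed

lemma greedy_choice:
  assumes "finite I" "card I \<le> m" "\<And>i. i \<in> I \<Longrightarrow> finite (A i) \<and> m \<le> card (A i)"
  shows "\<exists>g. inj_on g I \<and> (\<forall>i\<in>I. g i \<in> A i)"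
  using assms
proof (induction I rule: finite_induct)
  case empty
  then show ?case by auto
next
  case (insert x I)
  then obtain g where g: "inj_on g I" "\<forall>i\<in>I. g i \<in> A i" by auto
  have cI: "card (g ` I) < m" using insert card_image_le[of I g] by auto
  have "m \<le> card (A x)" "finite (A x)" using insert by auto
  then have "card (g ` I) < card (A x)" using cI by linarith
  then have "\<not> A x \<subseteq> g ` I" using insert(1) card_mono by (metis finite_imageI not_le)
  then obtain y where y: "y \<in> A x" "y \<notin> g ` I" by blast
  show ?case
    apply (rule exI[of _ "g(x := y)"])
    using g y insert(2) by (auto simp: inj_on_def)
qed

theorem lemma5:
  fixes k r :: nat and V :: "'a set" and E :: "'a set set" and \<sigma> :: "'a set \<Rightarrow> 'a"
  assumes "k \<ge> 3" and "r \<ge> 2"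
    and "is_kgraph k V E" and "selfish E" and "E \<noteq> {}"
    and "\<forall>e\<in>E. \<sigma> e \<in> e \<and> hdegree E (\<sigma> e) = 1"
  shows "ramsey_num k r V E
           \<le> ramsey_num (k - 1) r (V - \<sigma> ` E) ((\<lambda>e. e - {\<sigma> e}) ` E) + r * (card E - 1) + 1"
proof -
  define VG where "VG = V - \<sigma> ` E"
  define EG where "EG = (\<lambda>e. e - {\<sigma> e}) ` E"
  have finV: "finite V" and EV: "\<And>e. e \<in> E \<Longrightarrow> e \<subseteq> V \<and> card e = k"
    using assms(3) by (auto simp: is_kgraph_def)
  have "E \<subseteq> Pow V" using EV by blast
  moreover have "finite (Pow V)" using finV by simp
  ultimately have finE: "finite E" by (rule finite_subset)
  have sig: "\<And>e. e \<in> E \<Longrightarrow> \<sigma> e \<in> e" using assms(6) by blast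
  have uniq: "\<And>e e'. e \<in> E \<Longrightarrow> e' \<in> E \<Longrightarrow> \<sigma> e \<in> e' \<Longrightarrow> e' = e"
  proof -
    fix e e' assume a: "e \<in> E" "e' \<in> E" "\<sigma> e \<in> e'"
    have "hdegree E (\<sigma> e) = 1" using assms(6) a(1) by blast
    then have "card {x\<in>E. \<sigma> e \<in> x} = 1" unfolding hdegree_def .
    then obtain z where z: "{x\<in>E. \<sigma> e \<in> x} = {z}" by (rule card_1_singletonE)
    have "e \<in> {x\<in>E. \<sigma> e \<in> x}" using a(1) sig[OF a(1)] by simp
    then have 1: "e = z" using z by simp
    have "e' \<in> {x\<in>E. \<sigma> e \<in> x}" using a(2,3) by simp
    then have "e' = z" using z by simp
    then show "e' = e" using 1 by simp
  qed
  have notsig: "\<And>e v. e \<in> E \<Longrightarrow> v \<in> e - {\<sigma> e} \<Longrightarrow> v \<notin> \<sigma> ` E"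
    using uniq by blast
  have injsig: "inj_on \<sigma> E"
  proof (rule inj_onI)
    fix x y assume "x \<in> E" "y \<in> E" "\<sigma> x = \<sigma> y"
    then have "\<sigma> x \<in> y" using sig by simp
    then show "x = y" using uniq \<open>x \<in> E\<close> \<open>y \<in> E\<close> by blast
  qed
  have cardG: "\<And>e. e \<in> E \<Longrightarrow> card (e - {\<sigma> e}) = k - 1"
    using EV sig by (simp add: card_Diff_singleton)
  have "\<forall>x\<in>EG. x \<subseteq> VG \<and> card x = k - 1"
  proof
    fix x assume "x \<in> EG"
    then obtain e where e: "e \<in> E" "x = e - {\<sigma> e}" by (auto simp: EG_def)
    have "x \<subseteq> VG" unfolding VG_def e(2) using EV[OF e(1)] notsig[OF e(1)] by blast
    then show "x \<subseteq> VG \<and> card x = k - 1" using cardG[OF e(1)] e(2) by simp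
  qed
  then have kG: "is_kgraph (k - 1) VG EG"
    unfolding is_kgraph_def VG_def using finV by simp
  define N where "N = ramsey_num (k - 1) r VG EG"
  define m where "m = card E"
  have m1: "m \<ge> 1" using finE assms(5) m_def by (simp add: Suc_le_eq card_gt_0_iff)
  define M where "M = r * (m - 1) + 1"
  define n where "n = N + M"
  define B where "B = {N..<n}"
  have cardB: "card B = M" by (simp add: B_def n_def)
  let ?PG = "\<lambda>n. \<forall>col :: nat set \<Rightarrow> nat.
       (\<forall>S. S \<subseteq> {..<n} \<and> card S = k - 1 \<longrightarrow> col S < r) \<longrightarrow>
       (\<exists>c<r. mono_copy n col c VG EG)"
  have PG: "?PG N"
    unfolding N_def ramsey_num_def
    apply (rule LeastI_ex) using ramsey_exists[OF kG] assms(2) by simp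
  let ?PH = "\<lambda>n. \<forall>col :: nat set \<Rightarrow> nat.
       (\<forall>S. S \<subseteq> {..<n} \<and> card S = k \<longrightarrow> col S < r) \<longrightarrow>
       (\<exists>c<r. mono_copy n col c V E)"
  have PH: "?PH n"
  proof (intro allI impI)
    fix col :: "nat set \<Rightarrow> nat"
    assume col: "\<forall>S. S \<subseteq> {..<n} \<and> card S = k \<longrightarrow> col S < r"
    have pig: "\<exists>c<r. m \<le> card {b\<in>B. col (insert b S) = c}"
      if S: "S \<subseteq> {..<N}" "card S = k - 1" for S
    proof (rule ccontr)
      assume "\<not> ?thesis"
      then have lt: "\<forall>c<r. card {b\<in>B. col (insert b S) = c} \<le> m - 1" by auto
      have "B \<subseteq> (\<Union>c\<in>{..<r}. {b\<in>B. col (insert b S) = c})"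
      proof
        fix b assume b: "b \<in> B"
        have "b \<notin> S" using b S by (auto simp: B_def)
        moreover have "finite S" using S finite_subset by blast
        moreover have "k - 1 > 0" using assms(1) by simp
        ultimately have "card (insert b S) = k" using S assms(1) by simp
        moreover have "insert b S \<subseteq> {..<n}" using b S by (auto simp: B_def n_def)
        ultimately have "col (insert b S) < r" using col by blast
        then show "b \<in> (\<Union>c\<in>{..<r}. {b\<in>B. col (insert b S) = c})" using b by blast
      qed
      then have "card B \<le> card (\<Union>c\<in>{..<r}. {b\<in>B. col (insert b S) = c})"
        by (intro card_mono) (auto simp: B_def)
      also have "\<dots> \<le> (\<Sum>c\<in>{..<r}. card {b\<in>B. col (insert b S) = c})"
        by (rule card_UN_le) simp
      also have "\<dots> \<le> (\<Sum>c\<in>{..<r}. m - 1)" using lt by (intro sum_mono) auto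
      also have "\<dots> = r * (m - 1)" by simp
      finally show False using cardB M_def by simp
    qed
    define col' where "col' S = (if S \<subseteq> {..<N} \<and> card S = k - 1
        then (SOME c. c < r \<and> m \<le> card {b\<in>B. col (insert b S) = c}) else 0)" for S
    have col'P: "col' S < r \<and> m \<le> card {b\<in>B. col (insert b S) = col' S}"
      if "S \<subseteq> {..<N}" "card S = k - 1" for S
    proof -
      have "col' S = (SOME c. c < r \<and> m \<le> card {b\<in>B. col (insert b S) = c})"
        using that by (simp add: col'_def)
      then show ?thesis using someI_ex[OF pig[OF that]] by simp
    qed
    have "\<forall>S. S \<subseteq> {..<N} \<and> card S = k - 1 \<longrightarrow> col' S < r" using col'P by blast
    then have "\<exists>c<r. mono_copy N col' c VG EG" using PG[rule_format, of col'] by simp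
    then obtain c f where c: "c < r" and finj: "inj_on f VG" and fV: "f ` VG \<subseteq> {..<N}"
      and fE: "\<forall>e\<in>EG. col' (f ` e) = c"
      unfolding mono_copy_def by blast
    define A where "A e = {b\<in>B. col (insert b (f ` (e - {\<sigma> e}))) = c}" for e
    have Ae: "finite (A e) \<and> m \<le> card (A e)" if e: "e \<in> E" for e
    proof -
      have sub: "e - {\<sigma> e} \<subseteq> VG" using EV[OF e] notsig[OF e] by (auto simp: VG_def)
      have s1: "f ` (e - {\<sigma> e}) \<subseteq> {..<N}" using sub fV by blast
      have s2: "card (f ` (e - {\<sigma> e})) = k - 1"
        using card_image[OF inj_on_subset[OF finj sub]] cardG[OF e] by simp
      have "col' (f ` (e - {\<sigma> e})) = c" using fE e by (auto simp: EG_def)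
      then show ?thesis using col'P[OF s1 s2] by (auto simp: A_def B_def)
    qed
    have "\<exists>g. inj_on g E \<and> (\<forall>i\<in>E. g i \<in> A i)"
      by (rule greedy_choice[OF finE, of m]) (use Ae in \<open>simp_all add: m_def\<close>)
    then obtain b where binj: "inj_on b E" and bA: "\<forall>e\<in>E. b e \<in> A e" by blast
    define F where "F v = (if v \<in> \<sigma> ` E then b (inv_into E \<sigma> v) else f v)" for v
    have Fsig: "F (\<sigma> e) = b e" if "e \<in> E" for e
      using that injsig by (simp add: F_def)
    have FB: "F v \<in> B" if "v \<in> \<sigma> ` E" for v
      using that bA by (auto simp: A_def Fsig)
    have FG: "F v = f v" "F v < N" if "v \<in> VG" for v
      using that fV by (auto simp: F_def VG_def)
    have Finj: "inj_on F V"
    proof (rule inj_onI)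
      fix x y assume x: "x \<in> V" and y: "y \<in> V" and eq: "F x = F y"
      consider "x \<in> \<sigma> ` E" "y \<in> \<sigma> ` E" | "x \<in> VG" "y \<in> VG" | "x \<in> \<sigma> ` E" "y \<in> VG"
        | "x \<in> VG" "y \<in> \<sigma> ` E" using x y by (auto simp: VG_def)
      then show "x = y"
      proof cases
        case 1
        then obtain e e' where "e \<in> E" "e' \<in> E" "x = \<sigma> e" "y = \<sigma> e'" by blast
        moreover have "b e = b e'" using eq Fsig calculation by simp
        ultimately show ?thesis using binj inj_onD by metis
      next
        case 2 then show ?thesis using eq FG finj by (metis inj_onD)
      next
        case 3 then show ?thesis using FB[OF 3(1)] FG(2)[OF 3(2)] eq by (simp add: B_def)
      next
        case 4 then show ?thesis using FB[OF 4(2)] FG(2)[OF 4(1)] eq by (simp add: B_def)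
      qed
    qed
    have FV: "F ` V \<subseteq> {..<n}"
    proof
      fix y assume "y \<in> F ` V"
      then obtain v where v: "v \<in> V" "y = F v" by blast
      show "y \<in> {..<n}"
      proof (cases "v \<in> \<sigma> ` E")
        case True then show ?thesis using FB v by (auto simp: B_def)
      next
        case False then have "v \<in> VG" using v by (simp add: VG_def)
        then have "F v < N" using FG by blast
        then show ?thesis using v by (simp add: n_def)
      qed
    qed
    have "\<forall>e\<in>E. col (F ` e) = c"
    proof
      fix e assume e: "e \<in> E"
      have sub: "e - {\<sigma> e} \<subseteq> VG" using EV[OF e] notsig[OF e] by (auto simp: VG_def)
      have "F ` e = insert (F (\<sigma> e)) (F ` (e - {\<sigma> e}))" using sig[OF e] by blast
      also have "F ` (e - {\<sigma> e}) = f ` (e - {\<sigma> e})" using sub FG(1) by (intro image_cong) auto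
      also have "F (\<sigma> e) = b e" using Fsig e by simp
      finally have "F ` e = insert (b e) (f ` (e - {\<sigma> e}))" .
      then show "col (F ` e) = c" using bA e by (simp add: A_def)
    qed
    then show "\<exists>c<r. mono_copy n col c V E"
      unfolding mono_copy_def using c Finj FV by blast
  qed
  have "ramsey_num k r V E \<le> n"
    unfolding ramsey_num_def by (rule Least_le) (rule PH)
  then show ?thesis by (simp add: n_def M_def N_def m_def VG_def EG_def)
qed

end
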